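(* Let $V_S,V_A',V_A''$ be finite sets of propositional variables with $V_S\cap V_A''=\emptyset$. Let $\mathcal{T}_S^l,\mathcal{T}_S^u$ be propositional theories over $V_S$, let $\mathcal{T}_B'$ be a theory over $V_S\cup V_A'$ and $\mathcal{T}_B''$ a theory over $V_A'\cup V_A''$. Define ${\mathcal{T}_S^l}' := \mathrm{wsc}(\mathcal{T}_S^l;\mathcal{T}_B';V_A')$, ${\mathcal{T}_S^u}' := \mathrm{snc}(\mathcal{T}_S^u;\mathcal{T}_B';V_A')$. Then $\mathrm{wsc}({\mathcal{T}_S^l}';\mathcal{T}_B'';V_A'')\equiv \mathrm{wsc}(\mathcal{T}_S^l;\mathcal{T}_B'\land\mathcal{T}_B'';V_A'')$ and $\mathrm{snc}({\mathcal{T}_S^u}';\mathcal{T}_B'';V_A'')\equiv \mathrm{snc}(\mathcal{T}_S^u;\mathcal{T}_B'\land\mathcal{T}_B'';V_A'')$ (logical equivalence). That is, the tightest layered abstraction obtained in two layers coincides with the tightest abstraction from $\langle\mathcal{T}_S^l,\mathcal{T}_S^u\rangle$ with respect to $\mathcal{T}_B'\land\mathcal{T}_B''$ over $V_A''$.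
   Context: Classical propositional logic. A theory is a finite set of propositional formulas, identified with the conjunction of its elements (the empty theory is identified with $\top$). A formula is "over" a set $W$ of propositional variables if all variables occurring in it belong to $W$. Propositional quantifiers are abbreviations: $\exists p\,B := B[p:=\bot]\lor B[p:=\top]$ and $\forall p\,B := B[p:=\bot]\land B[p:=\top]$; for a finite set $V$, $\exists V$ and $\forall V$ denote iterated quantifiers. For formulas $A,\mathcal{T}$ and a set $W$ of variables, let $V$ be the set of variables occurring in $A$ or $\mathcal{T}$ but not in $W$, and define $\mathrm{snc}(A;\mathcal{T};W):=\exists V(\mathcal{T}\land A)$ and $\mathrm{wsc}(A;\mathcal{T};W):=\forall V(\mathcal{T}\to A)$; both are formulas over $W$. *)

theory Defs
  imports Main
begin

datatype 'v form =
    FBot | FTop | FVar 'v | FNot "'v form"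
  | FAnd "'v form" "'v form" | FOr "'v form" "'v form" | FImp "'v form" "'v form"

primrec eval :: "('v \<Rightarrow> bool) \<Rightarrow> 'v form \<Rightarrow> bool" where
  "eval I FBot = False"
| "eval I FTop = True"
| "eval I (FVar p) = I p"
| "eval I (FNot A) = (\<not> eval I A)"
| "eval I (FAnd A B) = (eval I A \<and> eval I B)"
| "eval I (FOr A B) = (eval I A \<or> eval I B)"
| "eval I (FImp A B) = (eval I A \<longrightarrow> eval I B)"

primrec vars :: "'v form \<Rightarrow> 'v set" where
  "vars FBot = {}"
| "vars FTop = {}"
| "vars (FVar p) = {p}"
| "vars (FNot A) = vars A"
| "vars (FAnd A B) = vars A \<union> vars B"
| "vars (FOr A B) = vars A \<union> vars B"
| "vars (FImp A B) = vars A \<union> vars B"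

primrec subst :: "'v \<Rightarrow> 'v form \<Rightarrow> 'v form \<Rightarrow> 'v form" where
  "subst p C FBot = FBot"
| "subst p C FTop = FTop"
| "subst p C (FVar q) = (if q = p then C else FVar q)"
| "subst p C (FNot A) = FNot (subst p C A)"
| "subst p C (FAnd A B) = FAnd (subst p C A) (subst p C B)"
| "subst p C (FOr A B) = FOr (subst p C A) (subst p C B)"
| "subst p C (FImp A B) = FImp (subst p C A) (subst p C B)"

definition ex1 :: "'v \<Rightarrow> 'v form \<Rightarrow> 'v form" where
  "ex1 p B = FOr (subst p FBot B) (subst p FTop B)"

definition all1 :: "'v \<Rightarrow> 'v form \<Rightarrow> 'v form" where
  "all1 p B = FAnd (subst p FBot B) (subst p FTop B)"

definition exs :: "'v::linorder set \<Rightarrow> 'v form \<Rightarrow> 'v form" where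
  "exs V B = foldr ex1 (sorted_list_of_set V) B"

definition alls :: "'v::linorder set \<Rightarrow> 'v form \<Rightarrow> 'v form" where
  "alls V B = foldr all1 (sorted_list_of_set V) B"

definition snc :: "'v::linorder form \<Rightarrow> 'v form \<Rightarrow> 'v set \<Rightarrow> 'v form" where
  "snc A T W = exs ((vars A \<union> vars T) - W) (FAnd T A)"

definition wsc :: "'v::linorder form \<Rightarrow> 'v form \<Rightarrow> 'v set \<Rightarrow> 'v form" where
  "wsc A T W = alls ((vars A \<union> vars T) - W) (FImp T A)"

definition equiv :: "'v form \<Rightarrow> 'v form \<Rightarrow> bool" where
  "equiv A B \<longleftrightarrow> (\<forall>I. eval I A = eval I B)"

end

theory Submission
  imports Defs
begin

lemma eval_cong: "(\<forall>x\<in>vars B. I x = J x) \<Longrightarrow> eval I B = eval J B"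
  by (induction B) auto

lemma eval_subst: "eval I (subst p C B) = eval (I(p := eval I C)) B"
  by (induction B) auto

lemma vars_subst: "vars (subst p C B) \<subseteq> (vars B - {p}) \<union> vars C"
  by (induction B) auto

lemma eval_ex1: "eval I (ex1 p B) = (\<exists>b. eval (I(p:=b)) B)"
  unfolding ex1_def by (auto simp: eval_subst) (metis (full_types))

lemma eval_all1: "eval I (all1 p B) = (\<forall>b. eval (I(p:=b)) B)"
  unfolding all1_def by (auto simp: eval_subst) (metis (full_types))

lemma vars_ex1: "vars (ex1 p B) \<subseteq> vars B - {p}"
  unfolding ex1_def using vars_subst[of p FBot B] vars_subst[of p FTop B] by auto

lemma vars_all1: "vars (all1 p B) \<subseteq> vars B - {p}"
  unfolding all1_def using vars_subst[of p FBot B] vars_subst[of p FTop B] by auto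

lemma eval_foldr_ex: "eval I (foldr ex1 xs B) = (\<exists>J. (\<forall>x. x \<notin> set xs \<longrightarrow> J x = I x) \<and> eval J B)"
proof (induction xs arbitrary: I)
  case Nil
  then show ?case by auto
next
  case (Cons a xs)
  show ?case
    unfolding foldr.simps o_def eval_ex1 Cons.IH
  proof
    assume "\<exists>b J. (\<forall>x. x \<notin> set xs \<longrightarrow> J x = (I(a := b)) x) \<and> eval J B"
    then obtain b J where "(\<forall>x. x \<notin> set xs \<longrightarrow> J x = (I(a := b)) x)" "eval J B" by blast
    then show "\<exists>J. (\<forall>x. x \<notin> set (a # xs) \<longrightarrow> J x = I x) \<and> eval J B" by (intro exI[of _ J]) auto
  next
    assume "\<exists>J. (\<forall>x. x \<notin> set (a # xs) \<longrightarrow> J x = I x) \<and> eval J B"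
    then obtain J where "(\<forall>x. x \<notin> set (a # xs) \<longrightarrow> J x = I x)" "eval J B" by blast
    then show "\<exists>b J. (\<forall>x. x \<notin> set xs \<longrightarrow> J x = (I(a := b)) x) \<and> eval J B"
      by (intro exI[of _ "J a"] exI[of _ J]) auto
  qed
qed

lemma eval_foldr_all: "eval I (foldr all1 xs B) = (\<forall>J. (\<forall>x. x \<notin> set xs \<longrightarrow> J x = I x) \<longrightarrow> eval J B)"
proof (induction xs arbitrary: I)
  case Nil
  then show ?case by auto
next
  case (Cons a xs)
  show ?case
    unfolding foldr.simps o_def eval_all1 Cons.IH
  proof
    assume H: "\<forall>b J. (\<forall>x. x \<notin> set xs \<longrightarrow> J x = (I(a := b)) x) \<longrightarrow> eval J B"
    show "\<forall>J. (\<forall>x. x \<notin> set (a # xs) \<longrightarrow> J x = I x) \<longrightarrow> eval J B"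
    proof (intro allI impI)
      fix J assume "\<forall>x. x \<notin> set (a # xs) \<longrightarrow> J x = I x"
      then show "eval J B" using H[rule_format, of J "J a"] by auto
    qed
  next
    assume H: "\<forall>J. (\<forall>x. x \<notin> set (a # xs) \<longrightarrow> J x = I x) \<longrightarrow> eval J B"
    then show "\<forall>b J. (\<forall>x. x \<notin> set xs \<longrightarrow> J x = (I(a := b)) x) \<longrightarrow> eval J B"
      by auto
  qed
qed

lemma vars_foldr_ex: "vars (foldr ex1 xs B) \<subseteq> vars B"
  by (induction xs) (use vars_ex1 in fastforce)+

lemma vars_foldr_all: "vars (foldr all1 xs B) \<subseteq> vars B"
  by (induction xs) (use vars_all1 in fastforce)+

lemma finite_vars: "finite (vars B)"
  by (induction B) auto

lemma eval_exs:
  assumes "finite V" "V \<subseteq> V'" "(V' - V) \<inter> vars B = {}"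
  shows "eval I (exs V B) = (\<exists>J. (\<forall>x. x \<notin> V' \<longrightarrow> J x = I x) \<and> eval J B)"
proof -
  have e: "eval I (exs V B) = (\<exists>J. (\<forall>x. x \<notin> V \<longrightarrow> J x = I x) \<and> eval J B)"
    unfolding exs_def eval_foldr_ex using assms(1) by simp
  show ?thesis unfolding e
  proof
    assume "\<exists>J. (\<forall>x. x \<notin> V \<longrightarrow> J x = I x) \<and> eval J B"
    then show "\<exists>J. (\<forall>x. x \<notin> V' \<longrightarrow> J x = I x) \<and> eval J B" using assms(2) by blast
  next
    assume "\<exists>J. (\<forall>x. x \<notin> V' \<longrightarrow> J x = I x) \<and> eval J B"
    then obtain J where J: "\<forall>x. x \<notin> V' \<longrightarrow> J x = I x" "eval J B" by blast
    let ?J = "\<lambda>x. if x \<in> V then J x else I x"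
    have "eval ?J B = eval J B" by (rule eval_cong) (use J assms(3) in auto)
    then show "\<exists>J. (\<forall>x. x \<notin> V \<longrightarrow> J x = I x) \<and> eval J B" using J
      by (intro exI[of _ ?J]) auto
  qed
qed

lemma eval_alls:
  assumes "finite V" "V \<subseteq> V'" "(V' - V) \<inter> vars B = {}"
  shows "eval I (alls V B) = (\<forall>J. (\<forall>x. x \<notin> V' \<longrightarrow> J x = I x) \<longrightarrow> eval J B)"
proof -
  have e: "eval I (alls V B) = (\<forall>J. (\<forall>x. x \<notin> V \<longrightarrow> J x = I x) \<longrightarrow> eval J B)"
    unfolding alls_def eval_foldr_all using assms(1) by simp
  show ?thesis unfolding e
  proof
    assume H: "\<forall>J. (\<forall>x. x \<notin> V \<longrightarrow> J x = I x) \<longrightarrow> eval J B"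
    show "\<forall>J. (\<forall>x. x \<notin> V' \<longrightarrow> J x = I x) \<longrightarrow> eval J B"
    proof (intro allI impI)
      fix J assume J: "\<forall>x. x \<notin> V' \<longrightarrow> J x = I x"
      let ?J = "\<lambda>x. if x \<in> V then J x else I x"
      have "eval ?J B = eval J B" by (rule eval_cong) (use J assms(3) in auto)
      then show "eval J B" using H[rule_format, of ?J] by auto
    qed
  next
    assume "\<forall>J. (\<forall>x. x \<notin> V' \<longrightarrow> J x = I x) \<longrightarrow> eval J B"
    then show "\<forall>J. (\<forall>x. x \<notin> V \<longrightarrow> J x = I x) \<longrightarrow> eval J B" using assms(2) by blast
  qed
qed

lemma vars_exs: "vars (exs V B) \<subseteq> vars B"
  unfolding exs_def by (rule vars_foldr_ex)

lemma vars_alls: "vars (alls V B) \<subseteq> vars B"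
  unfolding alls_def by (rule vars_foldr_all)

lemma key:
  fixes VS VA1 VA2 :: "'v set" and TS TB1 TB2 :: "'v form" and I J K :: "'v \<Rightarrow> bool"
  assumes "VS \<inter> VA2 = {}"
    and "vars TS \<subseteq> VS"
    and "vars TB1 \<subseteq> VS \<union> VA1"
    and "vars TB2 \<subseteq> VA1 \<union> VA2"
    and "\<forall>x. x \<notin> (vars TS \<union> vars (FAnd TB1 TB2)) - VA2 \<longrightarrow> J x = I x"
    and "\<forall>x. x \<notin> (vars TS \<union> vars TB1) - VA1 \<longrightarrow> K x = J x"
    and M_def: "M = (\<lambda>x. if x \<in> VS \<union> VA1 then K x else J x)"
  shows "(\<forall>x. x \<notin> (vars TS \<union> vars (FAnd TB1 TB2)) - VA2 \<longrightarrow> M x = I x)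
    \<and> eval M TB1 = eval K TB1 \<and> eval M TS = eval K TS \<and> eval M TB2 = eval J TB2"
proof (intro conjI)
  show "\<forall>x. x \<notin> (vars TS \<union> vars (FAnd TB1 TB2)) - VA2 \<longrightarrow> M x = I x"
    using assms(1,5,6) unfolding M_def by auto
  show "eval M TB1 = eval K TB1" by (rule eval_cong) (use assms(3) in \<open>auto simp: M_def\<close>)
  show "eval M TS = eval K TS" by (rule eval_cong) (use assms(2) in \<open>auto simp: M_def\<close>)
  show "eval M TB2 = eval J TB2" by (rule eval_cong) (use assms(1,4,6) in \<open>auto simp: M_def\<close>)
qed

theorem mainTheorem6:
  fixes VS VA1 VA2 :: "'v::linorder set"
    and TSl TSu TB1 TB2 :: "'v form"
  assumes "finite VS" and "finite VA1" and "finite VA2"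
    and "VS \<inter> VA2 = {}"
    and "vars TSl \<subseteq> VS" and "vars TSu \<subseteq> VS"
    and "vars TB1 \<subseteq> VS \<union> VA1"
    and "vars TB2 \<subseteq> VA1 \<union> VA2"
  shows "equiv (wsc (wsc TSl TB1 VA1) TB2 VA2) (wsc TSl (FAnd TB1 TB2) VA2)
       \<and> equiv (snc (snc TSu TB1 VA1) TB2 VA2) (snc TSu (FAnd TB1 TB2) VA2)"
proof
  define W1 where "W1 = (vars TSl \<union> vars TB1) - VA1"
  define L where "L = alls W1 (FImp TB1 TSl)"
  define W2 where "W2 = (vars L \<union> vars TB2) - VA2"
  define W3 where "W3 = (vars TSl \<union> vars (FAnd TB1 TB2)) - VA2"
  have fW1: "finite W1" unfolding W1_def using finite_vars by auto
  have fW2: "finite W2" unfolding W2_def using finite_vars by auto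
  have fW3: "finite W3" unfolding W3_def using finite_vars by auto
  have vL: "vars L \<subseteq> vars TSl \<union> vars TB1" unfolding L_def using vars_alls[of W1 "FImp TB1 TSl"] by auto
  have eL: "eval J L = (\<forall>K. (\<forall>x. x \<notin> W1 \<longrightarrow> K x = J x) \<longrightarrow> eval K (FImp TB1 TSl))" for J
    unfolding L_def by (rule eval_alls[OF fW1]) auto
  have e1: "eval I (wsc L TB2 VA2) = (\<forall>J. (\<forall>x. x \<notin> W3 \<longrightarrow> J x = I x) \<longrightarrow> eval J (FImp TB2 L))" for I
    unfolding wsc_def W2_def[symmetric] by (rule eval_alls[OF fW2]) (use vL in \<open>auto simp: W2_def W3_def\<close>)
  have e2: "eval I (wsc TSl (FAnd TB1 TB2) VA2) = (\<forall>J. (\<forall>x. x \<notin> W3 \<longrightarrow> J x = I x) \<longrightarrow> eval J (FImp (FAnd TB1 TB2) TSl))" for I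
    unfolding wsc_def W3_def[symmetric] by (rule eval_alls[OF fW3]) auto
  show "equiv (wsc (wsc TSl TB1 VA1) TB2 VA2) (wsc TSl (FAnd TB1 TB2) VA2)"
    unfolding equiv_def
  proof
    fix I
    have "wsc TSl TB1 VA1 = L" unfolding wsc_def L_def W1_def ..
    then have l: "eval I (wsc (wsc TSl TB1 VA1) TB2 VA2) = eval I (wsc L TB2 VA2)" by simp
    show "eval I (wsc (wsc TSl TB1 VA1) TB2 VA2) = eval I (wsc TSl (FAnd TB1 TB2) VA2)"
      unfolding l e1 e2 eL
    proof
      assume H: "\<forall>J. (\<forall>x. x \<notin> W3 \<longrightarrow> J x = I x) \<longrightarrow> eval J (FImp TB2 L)"
      show "\<forall>J. (\<forall>x. x \<notin> W3 \<longrightarrow> J x = I x) \<longrightarrow> eval J (FImp (FAnd TB1 TB2) TSl)"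
      proof (intro allI impI)
        fix J assume "\<forall>x. x \<notin> W3 \<longrightarrow> J x = I x"
        then have "eval J (FImp TB2 L)" using H by blast
        then show "eval J (FImp (FAnd TB1 TB2) TSl)" using eL[of J] by auto
      qed
    next
      assume H: "\<forall>J. (\<forall>x. x \<notin> W3 \<longrightarrow> J x = I x) \<longrightarrow> eval J (FImp (FAnd TB1 TB2) TSl)"
      show "\<forall>J. (\<forall>x. x \<notin> W3 \<longrightarrow> J x = I x) \<longrightarrow> eval J (FImp TB2 L)"
      proof (intro allI impI)
        fix J assume J: "\<forall>x. x \<notin> W3 \<longrightarrow> J x = I x"
        have "eval J L" if t2: "eval J TB2"
          unfolding eL
        proof (intro allI impI)
          fix K assume K: "\<forall>x. x \<notin> W1 \<longrightarrow> K x = J x"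
          define M where "M = (\<lambda>x. if x \<in> VS \<union> VA1 then K x else J x)"
          have k: "(\<forall>x. x \<notin> W3 \<longrightarrow> M x = I x)
            \<and> eval M TB1 = eval K TB1 \<and> eval M TSl = eval K TSl \<and> eval M TB2 = eval J TB2"
            unfolding W3_def
            by (rule key[OF assms(4,5,7,8) _ _ M_def]) (use J K in \<open>auto simp: W1_def W3_def\<close>)
          then show "eval K (FImp TB1 TSl)" using H t2 by (metis eval.simps(5,7))
        qed
        then show "eval J (FImp TB2 L)" by simp
      qed
    qed
  qed
next
  define W1 where "W1 = (vars TSu \<union> vars TB1) - VA1"
  define L where "L = exs W1 (FAnd TB1 TSu)"
  define W2 where "W2 = (vars L \<union> vars TB2) - VA2"
  define W3 where "W3 = (vars TSu \<union> vars (FAnd TB1 TB2)) - VA2"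
  have fW1: "finite W1" unfolding W1_def using finite_vars by auto
  have fW2: "finite W2" unfolding W2_def using finite_vars by auto
  have fW3: "finite W3" unfolding W3_def using finite_vars by auto
  have vL: "vars L \<subseteq> vars TSu \<union> vars TB1" unfolding L_def using vars_exs[of W1 "FAnd TB1 TSu"] by auto
  have eL: "eval J L = (\<exists>K. (\<forall>x. x \<notin> W1 \<longrightarrow> K x = J x) \<and> eval K (FAnd TB1 TSu))" for J
    unfolding L_def by (rule eval_exs[OF fW1]) auto
  have e1: "eval I (snc L TB2 VA2) = (\<exists>J. (\<forall>x. x \<notin> W3 \<longrightarrow> J x = I x) \<and> eval J (FAnd TB2 L))" for I
    unfolding snc_def W2_def[symmetric] by (rule eval_exs[OF fW2]) (use vL in \<open>auto simp: W2_def W3_def\<close>)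
  have e2: "eval I (snc TSu (FAnd TB1 TB2) VA2) = (\<exists>J. (\<forall>x. x \<notin> W3 \<longrightarrow> J x = I x) \<and> eval J (FAnd (FAnd TB1 TB2) TSu))" for I
    unfolding snc_def W3_def[symmetric] by (rule eval_exs[OF fW3]) auto
  show "equiv (snc (snc TSu TB1 VA1) TB2 VA2) (snc TSu (FAnd TB1 TB2) VA2)"
    unfolding equiv_def
  proof
    fix I
    have "snc TSu TB1 VA1 = L" unfolding snc_def L_def W1_def ..
    then have l: "eval I (snc (snc TSu TB1 VA1) TB2 VA2) = eval I (snc L TB2 VA2)" by simp
    show "eval I (snc (snc TSu TB1 VA1) TB2 VA2) = eval I (snc TSu (FAnd TB1 TB2) VA2)"
      unfolding l e1 e2 eL
    proof
      assume "\<exists>J. (\<forall>x. x \<notin> W3 \<longrightarrow> J x = I x) \<and> eval J (FAnd TB2 L)"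
      then obtain J where J: "\<forall>x. x \<notin> W3 \<longrightarrow> J x = I x" and t2: "eval J TB2" and "eval J L" by auto
      then obtain K where K: "\<forall>x. x \<notin> W1 \<longrightarrow> K x = J x" and t1: "eval K (FAnd TB1 TSu)"
        unfolding eL by blast
      define M where "M = (\<lambda>x. if x \<in> VS \<union> VA1 then K x else J x)"
      have k: "(\<forall>x. x \<notin> W3 \<longrightarrow> M x = I x)
        \<and> eval M TB1 = eval K TB1 \<and> eval M TSu = eval K TSu \<and> eval M TB2 = eval J TB2"
        unfolding W3_def
        by (rule key[OF assms(4,6,7,8) _ _ M_def]) (use J K in \<open>auto simp: W1_def W3_def\<close>)
      show "\<exists>J. (\<forall>x. x \<notin> W3 \<longrightarrow> J x = I x) \<and> eval J (FAnd (FAnd TB1 TB2) TSu)"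
        using k t1 t2 by (intro exI[of _ M]) auto
    next
      assume "\<exists>J. (\<forall>x. x \<notin> W3 \<longrightarrow> J x = I x) \<and> eval J (FAnd (FAnd TB1 TB2) TSu)"
      then obtain J where "\<forall>x. x \<notin> W3 \<longrightarrow> J x = I x" "eval J (FAnd (FAnd TB1 TB2) TSu)" by blast
      then show "\<exists>J. (\<forall>x. x \<notin> W3 \<longrightarrow> J x = I x) \<and> eval J (FAnd TB2 L)"
        using eL[of J] by (intro exI[of _ J]) auto
    qed
  qed
qed

end
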